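(* The sequence of functions $V^n$ converges uniformly on $[0,\infty)\times[0,\bar c]$ to $\bar V$.
   Context: Let $(W_t)_{t\ge0}$ be a standard Brownian motion and $X_t=x+\mu t+\sigma W_t$ with constants $\mu\in\mathbb R$, $\sigma>0$ and initial value $x\ge 0$; $(\mathcal F_t)_{t\ge0}$ is the completed filtration generated by $X$. Fix $q>0$, $\Lambda>0$, $\bar c>0$. For a set $S\subset[0,\bar c]$, $x\ge0$ and $c\in S$, $\Pi^S_{x,c}$ denotes the set of processes $C=(C_t)_{t\ge0}$ that are non-increasing, right-continuous, $(\mathcal F_t)$-adapted, take values in $S$, and satisfy $C_t\le c$ for all $t\ge 0$ (an immediate reduction at time $0$ is allowed). For such $C$, $X^C_t=X_t-\int_0^t C_s\,ds$, $\tau=\inf\{t\ge0: X^C_t<0\}$, $J(x;C)=\mathbb E\big[\int_0^{\tau}e^{-qs}(C_s+\Lambda)\,ds\big]$ and $V^S(x,c)=\sup_{C\in\Pi^S_{x,c}}J(x;C)$. Let $(\mathcal S^n)_{n\ge0}$ be finite sets with $\{0,\bar c\}=\mathcal S^0\subset\mathcal S^1\subset\cdots\subset[0,\bar c]$, each containing $0$ and $\bar c$, whose mesh size $\delta(\mathcal S^n)$ (maximal gap between consecutive elements) tends to $0$. For $(x,c)\in[0,\infty)\times[0,\bar c]$ let $\tilde c^n=\max\{c'\in\mathcal S^n: c'\le c\}$ and $V^n(x,c)=V^{\mathcal S^n}(x,\tilde c^n)$. Then $V^n(x,c)$ is non-decreasing in $n$ and bounded by $V^{[0,\bar c]}(x,c)$,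 and $\bar V(x,c):=\lim_{n\to\infty}V^n(x,c)$. *)

theory Defs
  imports "HOL-Probability.Probability"
begin

definition brownian_motion :: "'a measure \<Rightarrow> (real \<Rightarrow> 'a \<Rightarrow> real) \<Rightarrow> bool" where
  "brownian_motion M W \<longleftrightarrow>
     prob_space M \<and>
     (\<forall>t\<ge>0. W t \<in> borel_measurable M) \<and>
     (\<forall>\<omega>\<in>space M. W 0 \<omega> = 0) \<and>
     (\<forall>\<omega>\<in>space M. continuous_on {0..} (\<lambda>t. W t \<omega>)) \<and>
     (\<forall>s t. 0 \<le> s \<and> s < t \<longrightarrow>
        distributed M lborel (\<lambda>\<omega>. W t \<omega> - W s \<omega>) (normal_density 0 (sqrt (t - s)))) \<and>
     (\<forall>(n::nat) (ts::nat \<Rightarrow> real). 0 \<le> ts 0 \<and> (\<forall>i<n. ts i < ts (Suc i)) \<longrightarrow>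
        prob_space.indep_vars M (\<lambda>_. borel) (\<lambda>i \<omega>. W (ts (Suc i)) \<omega> - W (ts i) \<omega>) {..<n})"

definition proc_X :: "(real \<Rightarrow> 'a \<Rightarrow> real) \<Rightarrow> real \<Rightarrow> real \<Rightarrow> real \<Rightarrow> real \<Rightarrow> 'a \<Rightarrow> real" where
  "proc_X W x \<mu> \<sigma> t \<omega> = x + \<mu> * t + \<sigma> * W t \<omega>"

definition gen_filtration :: "'a measure \<Rightarrow> (real \<Rightarrow> 'a \<Rightarrow> real) \<Rightarrow> real \<Rightarrow> 'a measure" where
  "gen_filtration M X t = sigma (space M)
     ({X s -` B \<inter> space M | s B. 0 \<le> s \<and> s \<le> t \<and> B \<in> sets borel} \<union>
      {N. N \<subseteq> space M \<and> (\<exists>A\<in>null_sets M. N \<subseteq> A)})"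

definition admissible :: "'a measure \<Rightarrow> (real \<Rightarrow> 'a measure) \<Rightarrow> real set \<Rightarrow> real \<Rightarrow> (real \<Rightarrow> 'a \<Rightarrow> real) set" where
  "admissible M F S c = {C.
     (\<forall>\<omega>\<in>space M. \<forall>s t. 0 \<le> s \<and> s \<le> t \<longrightarrow> C t \<omega> \<le> C s \<omega>) \<and>
     (\<forall>\<omega>\<in>space M. \<forall>t\<ge>0. continuous (at_right t) (\<lambda>s. C s \<omega>)) \<and>
     (\<forall>\<omega>\<in>space M. \<forall>t\<ge>0. C t \<omega> \<in> S \<and> C t \<omega> \<le> c) \<and>
     (\<forall>t\<ge>0. (\<lambda>\<omega>. C t \<omega>) \<in> borel_measurable (F t))}"

definition proc_XC :: "(real \<Rightarrow> 'a \<Rightarrow> real) \<Rightarrow> (real \<Rightarrow> 'a \<Rightarrow> real) \<Rightarrow> real \<Rightarrow> 'a \<Rightarrow> real" where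
  "proc_XC X C t \<omega> = X t \<omega> - integral {0..t} (\<lambda>s. C s \<omega>)"

definition ruin_time :: "(real \<Rightarrow> 'a \<Rightarrow> real) \<Rightarrow> (real \<Rightarrow> 'a \<Rightarrow> real) \<Rightarrow> 'a \<Rightarrow> ereal" where
  "ruin_time X C \<omega> = Inf (ereal ` {t. 0 \<le> t \<and> proc_XC X C t \<omega> < 0})"

text \<open>J(x;C) = E[ int_0^tau e^{-qs} (C_s + Lambda) ds ] (nonnegative integrand, finite value).\<close>
definition payoff :: "'a measure \<Rightarrow> (real \<Rightarrow> 'a \<Rightarrow> real) \<Rightarrow> real \<Rightarrow> real \<Rightarrow> real \<Rightarrow> real \<Rightarrow> real
     \<Rightarrow> (real \<Rightarrow> 'a \<Rightarrow> real) \<Rightarrow> real" where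
  "payoff M W \<mu> \<sigma> q \<Lambda> x C = enn2real (\<integral>\<^sup>+ \<omega>.
     (\<integral>\<^sup>+ s. indicator {s. 0 \<le> s \<and> ereal s < ruin_time (proc_X W x \<mu> \<sigma>) C \<omega>} s *
        ennreal (exp (- q * s) * (C s \<omega> + \<Lambda>)) \<partial>lborel) \<partial>completion M)"

definition value_fun :: "'a measure \<Rightarrow> (real \<Rightarrow> 'a \<Rightarrow> real) \<Rightarrow> real \<Rightarrow> real \<Rightarrow> real \<Rightarrow> real
     \<Rightarrow> real set \<Rightarrow> real \<Rightarrow> real \<Rightarrow> real" where
  "value_fun M W \<mu> \<sigma> q \<Lambda> S x c =
     Sup (payoff M W \<mu> \<sigma> q \<Lambda> x ` admissible M (gen_filtration M (proc_X W x \<mu> \<sigma>)) S c)"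

definition mesh :: "real set \<Rightarrow> real" where
  "mesh S = Sup {b - a | a b. a \<in> S \<and> b \<in> S \<and> a < b \<and> {a<..<b} \<inter> S = {}}"

definition Vn :: "'a measure \<Rightarrow> (real \<Rightarrow> 'a \<Rightarrow> real) \<Rightarrow> real \<Rightarrow> real \<Rightarrow> real \<Rightarrow> real
     \<Rightarrow> (nat \<Rightarrow> real set) \<Rightarrow> nat \<Rightarrow> real \<Rightarrow> real \<Rightarrow> real" where
  "Vn M W \<mu> \<sigma> q \<Lambda> Sn n x c = value_fun M W \<mu> \<sigma> q \<Lambda> (Sn n) x (Max {c' \<in> Sn n. c' \<le> c})"

definition Vbar :: "'a measure \<Rightarrow> (real \<Rightarrow> 'a \<Rightarrow> real) \<Rightarrow> real \<Rightarrow> real \<Rightarrow> real \<Rightarrow> real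
     \<Rightarrow> (nat \<Rightarrow> real set) \<Rightarrow> real \<Rightarrow> real \<Rightarrow> real" where
  "Vbar M W \<mu> \<sigma> q \<Lambda> Sn x c = lim (\<lambda>n. Vn M W \<mu> \<sigma> q \<Lambda> Sn n x c)"

end

theory Submission
  imports Defs
begin

lemma nn_integral_cmult_le:
  fixes c :: ennreal assumes c0: "c \<noteq> 0" and ct: "c \<noteq> top"
  shows "(\<integral>\<^sup>+x. c * f x \<partial>M) \<le> c * integral\<^sup>N M f"
proof -
  have "integral\<^sup>S M g \<le> c * integral\<^sup>N M f"
    if g: "simple_function M g" "g \<le> (\<lambda>x. c * f x)" for g
  proof -
    define h where "h x = g x / c" for x
    have hs: "simple_function M h" using g(1) unfolding h_def by (rule simple_function_compose1)
    have hf: "h x \<le> f x" for x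
    proof -
      have "g x \<le> c * f x" using g(2) by (simp add: le_fun_def)
      then show ?thesis unfolding h_def
        by (metis c0 ct divide_le_posI_ennreal mult.commute not_gr_zero)
    qed
    have geq: "g = (\<lambda>x. c * h x)" unfolding h_def
      by (rule ext) (metis c0 ct ennreal_times_divide mult.commute ennreal_divide_times mult_divide_eq_ennreal)
    have "integral\<^sup>S M g = c * integral\<^sup>S M h" using hs geq by simp
    also have "integral\<^sup>S M h = integral\<^sup>N M h" using hs by (simp add: nn_integral_eq_simple_integral)
    also have "\<dots> \<le> integral\<^sup>N M f" using hf by (intro nn_integral_mono) auto
    finally show ?thesis by (simp add: mult_left_mono)
  qed
  then show ?thesis unfolding nn_integral_def[of M "\<lambda>x. c * f x"] by (auto intro: SUP_least)
qed

lemma exp_integral_bound: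
  assumes q: "q > 0"
  shows "(\<integral>\<^sup>+ s. indicator {0..} s * ennreal (exp (- q * s)) \<partial>lborel) \<le> ennreal (1 / q)"
proof -
  have "(\<integral>\<^sup>+ s. ennreal (exponential_density q s) \<partial>lborel) = 1"
  proof -
    have "emeasure (density lborel (exponential_density q)) UNIV = 1"
      using prob_space.emeasure_space_1[OF prob_space_exponential_density[OF q]] by simp
    then show ?thesis by (simp add: emeasure_density)
  qed
  have "(\<integral>\<^sup>+ s. indicator {0..} s * ennreal (exp (- q * s)) \<partial>lborel)
      = (\<integral>\<^sup>+ s. ennreal (1/q) * ennreal (exponential_density q s) \<partial>lborel)"
    using q by (intro nn_integral_cong) (auto simp: exponential_density_def indicator_def ennreal_mult[symmetric] mult.commute)
  also have "\<dots> = ennreal (1/q) * (\<integral>\<^sup>+ s. ennreal (exponential_density q s) \<partial>lborel)"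
    by (rule nn_integral_cmult) simp
  finally show ?thesis using \<open>(\<integral>\<^sup>+ s. ennreal (exponential_density q s) \<partial>lborel) = 1\<close> by simp
qed

definition rdn :: "real set \<Rightarrow> real \<Rightarrow> real" where
  "rdn S y = Max ({s\<in>S. s < y} \<union> {0})"

locale grid =
  fixes S :: "real set"
  assumes fin: "finite S" and zero: "0 \<in> S" and nonneg: "S \<subseteq> {0..}"
begin

lemma fin_set: "finite ({s\<in>S. s < y} \<union> {0})" using fin by auto

lemma rdn_in: "rdn S y \<in> S"
proof -
  have "rdn S y \<in> {s\<in>S. s < y} \<union> {0}" unfolding rdn_def using fin_set by (rule Max_in) auto
  then show ?thesis using zero by auto
qed

lemma rdn_nonneg: "0 \<le> rdn S y"
  unfolding rdn_def using fin_set by (intro Max_ge) auto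

lemma rdn_le: "0 \<le> y \<Longrightarrow> rdn S y \<le> y"
  unfolding rdn_def using fin_set by (subst Max_le_iff) auto

lemma rdn_mono: "y \<le> z \<Longrightarrow> rdn S y \<le> rdn S z"
  unfolding rdn_def using fin_set by (intro Max_mono) auto

lemma rdn_pos: assumes "0 < y" shows "rdn S y < y" "rdn S y = Max {s\<in>S. s < y}"
proof -
  have e: "{s\<in>S. s < y} \<union> {0} = {s\<in>S. s < y}" using zero assms by auto
  have "Max {s\<in>S. s < y} \<in> {s\<in>S. s < y}" using fin zero assms by (intro Max_in) auto
  then show "rdn S y < y" "rdn S y = Max {s\<in>S. s < y}" unfolding rdn_def e by auto
qed

lemma rdn_const_below:
  assumes "0 \<le> y"
  shows "\<exists>e>0. \<forall>z. y - e < z \<and> z \<le> y \<longrightarrow> rdn S z = rdn S y"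
proof (cases "y = 0")
  case True
  have "rdn S z = 0" if "z \<le> 0" for z
  proof -
    have "{s\<in>S. s < z} = {}" using nonneg that by force
    then have e: "{s\<in>S. s < z} \<union> {0} = {0}" by (simp only: Un_empty_left)
    show ?thesis unfolding rdn_def e by simp
  qed
  then show ?thesis using True by (intro exI[of _ 1]) auto
next
  case False
  then have yp: "0 < y" using assms by auto
  show ?thesis
  proof (intro exI[of _ "y - rdn S y"] conjI allI impI)
    show "0 < y - rdn S y" using rdn_pos[OF yp] by simp
    fix z assume z: "y - (y - rdn S y) < z \<and> z \<le> y"
    have "{s\<in>S. s < z} = {s\<in>S. s < y}"
    proof safe
      fix s assume "s \<in> S" "s < y"
      then have "s \<le> Max {s\<in>S. s < y}" using fin by (intro Max_ge) auto
      then show "s < z" using z rdn_pos[OF yp] by simp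
    qed (use z in auto)
    then show "rdn S z = rdn S y" unfolding rdn_def by simp
  qed
qed

lemma rdn_gap:
  assumes "0 \<le> y" "b \<in> S" "y \<le> b"
  shows "y - rdn S y \<le> \<bar>mesh S\<bar>"
proof (cases "y = 0")
  case True then show ?thesis using rdn_nonneg[of y] rdn_le[of y] by simp
next
  case False
  then have yp: "0 < y" using assms by auto
  define a where "a = rdn S y"
  define B where "B = Min {s\<in>S. y \<le> s}"
  have Bin: "B \<in> {s\<in>S. y \<le> s}" unfolding B_def using fin assms by (intro Min_in) auto
  have ay: "a < y" unfolding a_def using rdn_pos[OF yp] by simp
  have gap0: False if s: "s \<in> S" "a < s" "s < B" for s
  proof -
    show False
    proof (cases "s < y")
      case True
      then have "s \<le> Max {s\<in>S. s < y}" using fin s by (intro Max_ge) auto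
      then show ?thesis using s rdn_pos[OF yp] unfolding a_def by simp
    next
      case False
      then have "B \<le> s" unfolding B_def using fin s by (intro Min_le) auto
      then show ?thesis using s by simp
    qed
  qed
  have gap: "{a<..<B} \<inter> S = {}" using gap0 by auto
  have aS: "a \<in> S" unfolding a_def by (rule rdn_in)
  have mem: "B - a \<in> {b - a | a b. a \<in> S \<and> b \<in> S \<and> a < b \<and> {a<..<b} \<inter> S = {}}"
    using aS Bin ay gap by (intro CollectI exI[of _ a] exI[of _ B]) auto
  have finm: "finite {b - a | a b. a \<in> S \<and> b \<in> S \<and> a < b \<and> {a<..<b} \<inter> S = {}}"
  proof -
    have "{b - a | a b. a \<in> S \<and> b \<in> S \<and> a < b \<and> {a<..<b} \<inter> S = {}} \<subseteq> (\<lambda>(a,b). b - a) ` (S \<times> S)"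
      by auto
    then show ?thesis using fin by (meson finite_SigmaI finite_imageI finite_subset)
  qed
  have "B - a \<le> mesh S" unfolding mesh_def using finm mem by (intro cSup_upper) (auto intro: bdd_above_finite)
  then show ?thesis using Bin unfolding a_def by auto
qed

end


lemma adm_props:
  assumes "C \<in> admissible M F T c"
  shows "\<And>\<omega> s t. \<omega> \<in> space M \<Longrightarrow> 0 \<le> s \<Longrightarrow> s \<le> t \<Longrightarrow> C t \<omega> \<le> C s \<omega>"
    and "\<And>\<omega> t. \<omega> \<in> space M \<Longrightarrow> 0 \<le> t \<Longrightarrow> continuous (at_right t) (\<lambda>s. C s \<omega>)"
    and "\<And>\<omega> t. \<omega> \<in> space M \<Longrightarrow> 0 \<le> t \<Longrightarrow> C t \<omega> \<in> T \<and> C t \<omega> \<le> c"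
    and "\<And>t. 0 \<le> t \<Longrightarrow> (\<lambda>\<omega>. C t \<omega>) \<in> borel_measurable (F t)"
  using assms unfolding admissible_def by blast+

lemma rdn_admissible:
  assumes g: "grid S" and C: "C \<in> admissible M F T c" and T: "T \<subseteq> {0..}"
  shows "(\<lambda>t \<omega>. rdn S (C t \<omega>)) \<in> admissible M F S (Max {c'\<in>S. c' \<le> c})"
proof -
  interpret grid S by (rule g)
  note P = adm_props[OF C]
  have nn: "0 \<le> C t \<omega>" if "\<omega> \<in> space M" "0 \<le> t" for \<omega> t using P(3)[OF that] T by auto
  have A1: "\<forall>\<omega>\<in>space M. \<forall>s t. 0 \<le> s \<and> s \<le> t \<longrightarrow> rdn S (C t \<omega>) \<le> rdn S (C s \<omega>)"
    using P(1) by (auto intro: rdn_mono)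
  have A2: "continuous (at_right t) (\<lambda>s. rdn S (C s \<omega>))" if w: "\<omega> \<in> space M" and t: "0 \<le> t" for \<omega> t
  proof -
    obtain e where e: "e > 0" "\<And>z. C t \<omega> - e < z \<and> z \<le> C t \<omega> \<Longrightarrow> rdn S z = rdn S (C t \<omega>)"
      using rdn_const_below[OF nn[OF w t]] by blast
    have lim: "((\<lambda>s. C s \<omega>) \<longlongrightarrow> C t \<omega>) (at_right t)"
      using P(2)[OF w t] by (simp add: continuous_within)
    have ev1: "\<forall>\<^sub>F s in at_right t. dist (C s \<omega>) (C t \<omega>) < e" using tendstoD[OF lim e(1)] .
    have ev2: "\<forall>\<^sub>F s in at_right t. t < s" by (rule eventually_at_right_less)
    have "\<forall>\<^sub>F s in at_right t. rdn S (C s \<omega>) = rdn S (C t \<omega>)"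
      using ev1 ev2
    proof eventually_elim
      case (elim s)
      have "C s \<omega> \<le> C t \<omega>" using P(1)[OF w t] elim by simp
      moreover have "C t \<omega> - e < C s \<omega>" using elim by (simp add: dist_real_def)
      ultimately show ?case using e(2) by blast
    qed
    then have "((\<lambda>s. rdn S (C s \<omega>)) \<longlongrightarrow> rdn S (C t \<omega>)) (at_right t)"
      by (rule tendsto_eventually)
    then show ?thesis by (simp add: continuous_within)
  qed
  have A3: "rdn S (C t \<omega>) \<in> S \<and> rdn S (C t \<omega>) \<le> Max {c'\<in>S. c' \<le> c}"
    if w: "\<omega> \<in> space M" and t: "0 \<le> t" for \<omega> t
  proof -
    have "rdn S (C t \<omega>) \<le> c" using rdn_le[OF nn[OF w t]] P(3)[OF w t] by simp
    then show ?thesis using rdn_in fin by (auto intro: Max_ge)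
  qed
  have rm: "mono (rdn S)" by (auto intro: monoI rdn_mono)
  have A4: "(\<lambda>\<omega>. rdn S (C t \<omega>)) \<in> borel_measurable (F t)" if "0 \<le> t" for t
    using measurable_compose[OF P(4)[OF that] borel_measurable_mono[OF rm]] .
  show ?thesis unfolding admissible_def using A1 A2 A3 A4 by blast
qed


definition inner :: "(real \<Rightarrow> 'a \<Rightarrow> real) \<Rightarrow> real \<Rightarrow> real \<Rightarrow> real \<Rightarrow> real \<Rightarrow> real
     \<Rightarrow> (real \<Rightarrow> 'a \<Rightarrow> real) \<Rightarrow> 'a \<Rightarrow> ennreal" where
  "inner W \<mu> \<sigma> q \<Lambda> x C \<omega> = (\<integral>\<^sup>+ s. indicator {s. 0 \<le> s \<and> ereal s < ruin_time (proc_X W x \<mu> \<sigma>) C \<omega>} s *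
        ennreal (exp (- q * s) * (C s \<omega> + \<Lambda>)) \<partial>lborel)"

lemma payoff_inner: "payoff M W \<mu> \<sigma> q \<Lambda> x C = enn2real (\<integral>\<^sup>+ \<omega>. inner W \<mu> \<sigma> q \<Lambda> x C \<omega> \<partial>completion M)"
  unfolding payoff_def inner_def ..

lemma inner_bound:
  assumes C: "C \<in> admissible M F T c" and T: "T \<subseteq> {0..cbar}" and q: "q > 0" and L: "\<Lambda> > 0"
    and w: "\<omega> \<in> space M"
  shows "inner W \<mu> \<sigma> q \<Lambda> x C \<omega> \<le> ennreal ((cbar + \<Lambda>) / q)"
proof -
  note P = adm_props[OF C]
  have "inner W \<mu> \<sigma> q \<Lambda> x C \<omega> \<le> (\<integral>\<^sup>+ s. ennreal (cbar + \<Lambda>) * (indicator {0..} s * ennreal (exp (- q * s))) \<partial>lborel)"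
    unfolding inner_def
  proof (intro nn_integral_mono)
    fix s :: real
    show "indicator {s. 0 \<le> s \<and> ereal s < ruin_time (proc_X W x \<mu> \<sigma>) C \<omega>} s * ennreal (exp (- q * s) * (C s \<omega> + \<Lambda>))
          \<le> ennreal (cbar + \<Lambda>) * (indicator {0..} s * ennreal (exp (- q * s)))"
    proof (cases "0 \<le> s")
      case True
      have "C s \<omega> \<le> cbar" "0 \<le> C s \<omega>" using P(3)[OF w True] T by auto
      then have "exp (- q * s) * (C s \<omega> + \<Lambda>) \<le> (cbar + \<Lambda>) * exp (- q * s)"
        by (simp add: mult.commute)
      moreover have "ennreal (cbar + \<Lambda>) * ennreal (exp (- q * s)) = ennreal ((cbar + \<Lambda>) * exp (- q * s))"
        using L \<open>C s \<omega> \<le> cbar\<close> \<open>0 \<le> C s \<omega>\<close> by (intro ennreal_mult[symmetric]) auto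
      ultimately have "ennreal (exp (- q * s) * (C s \<omega> + \<Lambda>)) \<le> ennreal (cbar + \<Lambda>) * ennreal (exp (- q * s))"
        by (simp add: ennreal_leI)
      then show ?thesis using True by (auto simp: indicator_def)
    qed (auto simp: indicator_def)
  qed
  also have "\<dots> = ennreal (cbar + \<Lambda>) * (\<integral>\<^sup>+ s. indicator {0..} s * ennreal (exp (- q * s)) \<partial>lborel)"
    by (rule nn_integral_cmult) simp
  also have "\<dots> \<le> ennreal (cbar + \<Lambda>) * ennreal (1 / q)"
    by (intro mult_left_mono exp_integral_bound q) simp
  also have "\<dots> = ennreal ((cbar + \<Lambda>) / q)"
    using q L P(3)[OF w order_refl] T by (subst ennreal_mult[symmetric]) auto
  finally show ?thesis .
qed

lemma outer_bound:
  assumes C: "C \<in> admissible M F T c" and T: "T \<subseteq> {0..cbar}" and q: "q > 0" and L: "\<Lambda> > 0"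
    and M: "prob_space M"
  shows "(\<integral>\<^sup>+ \<omega>. inner W \<mu> \<sigma> q \<Lambda> x C \<omega> \<partial>completion M) \<le> ennreal ((cbar + \<Lambda>) / q)"
proof -
  have "(\<integral>\<^sup>+ \<omega>. inner W \<mu> \<sigma> q \<Lambda> x C \<omega> \<partial>completion M) \<le> (\<integral>\<^sup>+ \<omega>. ennreal ((cbar + \<Lambda>) / q) \<partial>completion M)"
    by (intro nn_integral_mono inner_bound[OF C T q L]) auto
  also have "\<dots> = ennreal ((cbar + \<Lambda>) / q) * emeasure (completion M) (space M)"
    by (simp add: nn_integral_const)
  also have "emeasure (completion M) (space M) = 1"
    using prob_space.emeasure_space_1[OF M] by simp
  finally show ?thesis by simp
qed

lemma payoff_bounds:
  assumes C: "C \<in> admissible M F T c" and T: "T \<subseteq> {0..cbar}" and q: "q > 0" and L: "\<Lambda> > 0"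
    and M: "prob_space M" and cb: "0 \<le> cbar"
  shows "0 \<le> payoff M W \<mu> \<sigma> q \<Lambda> x C" "payoff M W \<mu> \<sigma> q \<Lambda> x C \<le> (cbar + \<Lambda>) / q"
proof -
  show "0 \<le> payoff M W \<mu> \<sigma> q \<Lambda> x C" unfolding payoff_inner by simp
  show "payoff M W \<mu> \<sigma> q \<Lambda> x C \<le> (cbar + \<Lambda>) / q"
    unfolding payoff_inner using enn2real_mono[OF outer_bound[OF C T q L M, of W \<mu> \<sigma> x]] cb L q
    by simp
qed


lemma integral_C_le:
  assumes C: "C \<in> admissible M F T c" and C': "C' \<in> admissible M F' T' c'" and w: "\<omega> \<in> space M"
    and le: "\<And>t. 0 \<le> t \<Longrightarrow> C' t \<omega> \<le> C t \<omega>"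
  shows "integral {0..t} (\<lambda>s. C' s \<omega>) \<le> integral {0..t} (\<lambda>s. C s \<omega>)"
proof -
  have intg: "(\<lambda>s. D s \<omega>) integrable_on {0..t}" if D: "D \<in> admissible M G U e" for D G U e
  proof -
    have "mono_on {0..t} (\<lambda>s. - D s \<omega>)"
      using adm_props(1)[OF D w] by (auto simp: mono_on_def)
    then have "(\<lambda>s. - (- D s \<omega>)) integrable_on {0..t}"
      by (intro integrable_neg integrable_on_mono_on)
    then show ?thesis by simp
  qed
  show ?thesis using intg[OF C] intg[OF C'] le by (intro integral_le) auto
qed

lemma ruin_le:
  assumes C: "C \<in> admissible M F T c" and C': "C' \<in> admissible M F' T' c'" and w: "\<omega> \<in> space M"
    and le: "\<And>t. 0 \<le> t \<Longrightarrow> C' t \<omega> \<le> C t \<omega>"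
  shows "ruin_time X C \<omega> \<le> ruin_time X C' \<omega>"
proof -
  have "{t. 0 \<le> t \<and> proc_XC X C' t \<omega> < 0} \<subseteq> {t. 0 \<le> t \<and> proc_XC X C t \<omega> < 0}"
  proof -
    have I: "integral {0..t} (\<lambda>s. C' s \<omega>) \<le> integral {0..t} (\<lambda>s. C s \<omega>)" for t
      using integral_C_le[OF C C' w] le by blast
    show ?thesis unfolding proc_XC_def using I by (auto intro: less_le_trans)
  qed
  then show ?thesis unfolding ruin_time_def by (intro Inf_superset_mono image_mono)
qed

lemma payoff_compare:
  assumes C: "C \<in> admissible M F T c" and T: "T \<subseteq> {0..cbar}"
    and C': "C' \<in> admissible M F' T' c'" and T': "T' \<subseteq> {0..cbar}"
    and q: "q > 0" and L: "\<Lambda> > 0" and M: "prob_space M" and d: "0 \<le> d"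
    and le: "\<And>\<omega> t. \<omega> \<in> space M \<Longrightarrow> 0 \<le> t \<Longrightarrow> C' t \<omega> \<le> C t \<omega> \<and> C t \<omega> \<le> C' t \<omega> + d"
  shows "payoff M W \<mu> \<sigma> q \<Lambda> x C \<le> (1 + d / \<Lambda>) * payoff M W \<mu> \<sigma> q \<Lambda> x C'"
proof -
  define k where "k = 1 + d / \<Lambda>"
  have k: "k \<ge> 1" unfolding k_def using d L by simp
  let ?X = "proc_X W x \<mu> \<sigma>"
  have step2: "inner W \<mu> \<sigma> q \<Lambda> x C \<omega> \<le> ennreal k * inner W \<mu> \<sigma> q \<Lambda> x C' \<omega>" if w: "\<omega> \<in> space M" for \<omega>
  proof -
    have r: "ruin_time ?X C \<omega> \<le> ruin_time ?X C' \<omega>"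
      using le[OF w] by (intro ruin_le[OF C C' w]) auto
    have "inner W \<mu> \<sigma> q \<Lambda> x C \<omega> \<le> (\<integral>\<^sup>+ s. ennreal k * (indicator {s. 0 \<le> s \<and> ereal s < ruin_time ?X C' \<omega>} s *
        ennreal (exp (- q * s) * (C' s \<omega> + \<Lambda>))) \<partial>lborel)"
      unfolding inner_def
    proof (intro nn_integral_mono)
      fix s :: real
      show "indicator {s. 0 \<le> s \<and> ereal s < ruin_time ?X C \<omega>} s * ennreal (exp (- q * s) * (C s \<omega> + \<Lambda>))
        \<le> ennreal k * (indicator {s. 0 \<le> s \<and> ereal s < ruin_time ?X C' \<omega>} s *
        ennreal (exp (- q * s) * (C' s \<omega> + \<Lambda>)))"
      proof (cases "0 \<le> s \<and> ereal s < ruin_time ?X C \<omega>")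
        case True
        then have s: "0 \<le> s" and s2: "ereal s < ruin_time ?X C' \<omega>" using r by auto
        have c1: "C s \<omega> \<le> C' s \<omega> + d" "0 \<le> C' s \<omega>"
          using le[OF w s] adm_props(3)[OF C' w s] T' by auto
        have "C s \<omega> + \<Lambda> \<le> k * (C' s \<omega> + \<Lambda>)"
        proof -
          have "k * (C' s \<omega> + \<Lambda>) = C' s \<omega> + \<Lambda> + d + d * C' s \<omega> / \<Lambda>"
            unfolding k_def using L by (simp add: field_simps)
          moreover have "0 \<le> d * C' s \<omega> / \<Lambda>" using d c1 L by simp
          ultimately show ?thesis using c1 by linarith
        qed
        then have "(C s \<omega> + \<Lambda>) * exp (- q * s) \<le> (k * (C' s \<omega> + \<Lambda>)) * exp (- q * s)"
          by (rule mult_right_mono) simp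
        then have "exp (- q * s) * (C s \<omega> + \<Lambda>) \<le> k * (exp (- q * s) * (C' s \<omega> + \<Lambda>))"
          by (simp add: mult_ac)
        moreover have "ennreal k * ennreal (exp (- q * s) * (C' s \<omega> + \<Lambda>)) = ennreal (k * (exp (- q * s) * (C' s \<omega> + \<Lambda>)))"
          using k c1 L by (intro ennreal_mult[symmetric]) auto
        ultimately show ?thesis using True s s2 by (simp add: indicator_def ennreal_leI)
      qed (auto simp: indicator_def)
    qed
    also have "\<dots> \<le> ennreal k * inner W \<mu> \<sigma> q \<Lambda> x C' \<omega>"
      unfolding inner_def using k by (intro nn_integral_cmult_le) auto
    finally show ?thesis .
  qed
  have "(\<integral>\<^sup>+ \<omega>. inner W \<mu> \<sigma> q \<Lambda> x C \<omega> \<partial>completion M) \<le> (\<integral>\<^sup>+ \<omega>. ennreal k * inner W \<mu> \<sigma> q \<Lambda> x C' \<omega> \<partial>completion M)"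
    using step2 by (intro nn_integral_mono) auto
  also have "\<dots> \<le> ennreal k * (\<integral>\<^sup>+ \<omega>. inner W \<mu> \<sigma> q \<Lambda> x C' \<omega> \<partial>completion M)"
    using k by (intro nn_integral_cmult_le) auto
  finally have le1: "(\<integral>\<^sup>+ \<omega>. inner W \<mu> \<sigma> q \<Lambda> x C \<omega> \<partial>completion M) \<le> ennreal k * (\<integral>\<^sup>+ \<omega>. inner W \<mu> \<sigma> q \<Lambda> x C' \<omega> \<partial>completion M)" .
  have fin: "(\<integral>\<^sup>+ \<omega>. inner W \<mu> \<sigma> q \<Lambda> x C' \<omega> \<partial>completion M) < top"
    using outer_bound[OF C' T' q L M, of W \<mu> \<sigma> x] by (simp add: le_less_trans)
  have "payoff M W \<mu> \<sigma> q \<Lambda> x C \<le> enn2real (ennreal k * (\<integral>\<^sup>+ \<omega>. inner W \<mu> \<sigma> q \<Lambda> x C' \<omega> \<partial>completion M))"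
    unfolding payoff_inner using fin k by (intro enn2real_mono le1) (simp add: ennreal_mult_less_top)
  also have "\<dots> = k * payoff M W \<mu> \<sigma> q \<Lambda> x C'"
    unfolding payoff_inner using k by (simp add: enn2real_mult)
  finally show ?thesis unfolding k_def .
qed


lemma zero_adm:
  assumes "0 \<in> S" "0 \<le> c"
  shows "(\<lambda>t \<omega>. 0) \<in> admissible M F S c"
  using assms unfolding admissible_def by auto

lemma key:
  assumes M: "prob_space M" and q: "q > 0" and L: "\<Lambda> > 0" and cb: "cbar > 0"
    and fin: "finite S" and S0: "0 \<in> S" and Sc: "cbar \<in> S" and Ssub: "S \<subseteq> {0..cbar}"
    and c: "0 \<le> c" "c \<le> cbar"
  shows "\<bar>value_fun M W \<mu> \<sigma> q \<Lambda> {0..cbar} x c - value_fun M W \<mu> \<sigma> q \<Lambda> S x (Max {c'\<in>S. c' \<le> c})\<bar>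
           \<le> \<bar>mesh S\<bar> * ((cbar + \<Lambda>) / q) / \<Lambda>"
proof -
  define F where "F = gen_filtration M (proc_X W x \<mu> \<sigma>)"
  define ct where "ct = Max {c'\<in>S. c' \<le> c}"
  define d where "d = \<bar>mesh S\<bar>"
  define B where "B = (cbar + \<Lambda>) / q"
  define A1 where "A1 = admissible M F {0..cbar} c"
  define A2 where "A2 = admissible M F S ct"
  define P where "P = payoff M W \<mu> \<sigma> q \<Lambda> x"
  have g: "grid S" using fin S0 Ssub by unfold_locales auto
  have ctf: "finite {c'\<in>S. c' \<le> c}" "{c'\<in>S. c' \<le> c} \<noteq> {}" "0 \<in> {c'\<in>S. c' \<le> c}" using fin S0 c by auto
  have ctc: "ct \<le> c" "0 \<le> ct" unfolding ct_def
    using Max_le_iff[OF ctf(1,2)] Max_ge[OF ctf(1,3)] by auto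
  have sub: "A2 \<subseteq> A1"
  proof
    fix C assume CA: "C \<in> A2"
    note Q = adm_props[OF CA[unfolded A2_def]]
    have "\<forall>\<omega>\<in>space M. \<forall>t\<ge>0. C t \<omega> \<in> {0..cbar} \<and> C t \<omega> \<le> c"
      using Q(3) Ssub ctc by (meson subsetD order_trans)
    then show "C \<in> A1" unfolding A1_def admissible_def using Q(1,2,4) by blast
  qed
  have z1: "(\<lambda>t \<omega>. 0) \<in> A1" unfolding A1_def using c by (intro zero_adm) auto
  have z2: "(\<lambda>t \<omega>. 0) \<in> A2" unfolding A2_def using ctc S0 by (intro zero_adm) auto
  have bnd1: "0 \<le> P C \<and> P C \<le> B" if "C \<in> A1" for C
    using payoff_bounds[OF that[unfolded A1_def] order_refl q L M] cb unfolding P_def B_def by auto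
  have bnd2: "0 \<le> P C \<and> P C \<le> B" if "C \<in> A2" for C
    using bnd1 sub that by auto
  have bdd1: "bdd_above (P ` A1)" by (rule bdd_aboveI[of _ B]) (use bnd1 in auto)
  have bdd2: "bdd_above (P ` A2)" by (rule bdd_aboveI[of _ B]) (use bnd2 in auto)
  have V1: "value_fun M W \<mu> \<sigma> q \<Lambda> {0..cbar} x c = Sup (P ` A1)"
    unfolding value_fun_def P_def A1_def F_def ..
  have V2: "value_fun M W \<mu> \<sigma> q \<Lambda> S x ct = Sup (P ` A2)"
    unfolding value_fun_def P_def A2_def F_def ..
  have le21: "Sup (P ` A2) \<le> Sup (P ` A1)"
    using z2 sub bdd1 by (intro cSup_subset_mono) auto
  have V2nn: "0 \<le> Sup (P ` A2)" "Sup (P ` A2) \<le> B"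
  proof -
    have "P (\<lambda>t \<omega>. 0) \<le> Sup (P ` A2)" using z2 bdd2 by (intro cSup_upper) auto
    then show "0 \<le> Sup (P ` A2)" using bnd2[OF z2] by linarith
    show "Sup (P ` A2) \<le> B" using z2 bnd2 by (intro cSup_least) auto
  qed
  have le12: "Sup (P ` A1) \<le> (1 + d / \<Lambda>) * Sup (P ` A2)"
  proof (rule cSup_least)
    show "P ` A1 \<noteq> {}" using z1 by auto
    fix y assume "y \<in> P ` A1"
    then obtain C where C: "C \<in> A1" and y: "y = P C" by auto
    define C' where "C' = (\<lambda>t \<omega>. rdn S (C t \<omega>))"
    have C'A: "C' \<in> A2" unfolding C'_def A2_def ct_def
      using rdn_admissible[OF g C[unfolded A1_def]] by simp
    have lec: "C' t \<omega> \<le> C t \<omega> \<and> C t \<omega> \<le> C' t \<omega> + d" if "\<omega> \<in> space M" "0 \<le> t" for \<omega> t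
    proof -
      have r: "C t \<omega> \<in> {0..cbar}" using adm_props(3)[OF C[unfolded A1_def] that] by auto
      show ?thesis unfolding C'_def d_def
        using grid.rdn_le[OF g, of "C t \<omega>"] grid.rdn_gap[OF g, of "C t \<omega>" cbar] r Sc by auto
    qed
    have "P C \<le> (1 + d / \<Lambda>) * P C'"
      unfolding P_def
      by (rule payoff_compare[OF C[unfolded A1_def] order_refl C'A[unfolded A2_def] Ssub q L M _ lec])
         (auto simp: d_def)
    also have "P C' \<le> Sup (P ` A2)" using C'A bdd2 by (auto intro: cSup_upper)
    then have "(1 + d / \<Lambda>) * P C' \<le> (1 + d / \<Lambda>) * Sup (P ` A2)"
      using L by (intro mult_left_mono) (auto simp: d_def)
    finally show "y \<le> (1 + d / \<Lambda>) * Sup (P ` A2)" using y by simp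
  qed
  have "Sup (P ` A1) - Sup (P ` A2) \<le> d / \<Lambda> * Sup (P ` A2)"
    using le12 by (simp add: algebra_simps)
  also have "\<dots> \<le> d / \<Lambda> * B" using V2nn L by (intro mult_left_mono) (auto simp: d_def)
  finally have "\<bar>Sup (P ` A1) - Sup (P ` A2)\<bar> \<le> d * B / \<Lambda>" using le21 by simp
  then show ?thesis unfolding V1 ct_def[symmetric] V2 d_def B_def .
qed


theorem proposition5p1:
  fixes M :: "'a measure" and W :: "real \<Rightarrow> 'a \<Rightarrow> real"
    and \<mu> \<sigma> q \<Lambda> cbar :: real and Sn :: "nat \<Rightarrow> real set"
  assumes "brownian_motion M W"
    and "\<sigma> > 0" and "q > 0" and "\<Lambda> > 0" and "cbar > 0"
    and "\<forall>n. finite (Sn n)"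
    and "Sn 0 = {0, cbar}"
    and "\<forall>n. Sn n \<subseteq> Sn (Suc n)"
    and "\<forall>n. Sn n \<subseteq> {0..cbar}"
    and "\<forall>n. 0 \<in> Sn n \<and> cbar \<in> Sn n"
    and "(\<lambda>n. mesh (Sn n)) \<longlonglongrightarrow> 0"
  shows "uniform_limit ({0..} \<times> {0..cbar})
           (\<lambda>n (x, c). Vn M W \<mu> \<sigma> q \<Lambda> Sn n x c)
           (\<lambda>(x, c). Vbar M W \<mu> \<sigma> q \<Lambda> Sn x c) sequentially"
proof -
  have M: "prob_space M" using assms(1) unfolding brownian_motion_def by blast
  define b where "b n = \<bar>mesh (Sn n)\<bar> * ((cbar + \<Lambda>) / q) / \<Lambda>" for n
  define Vf where "Vf x c = value_fun M W \<mu> \<sigma> q \<Lambda> {0..cbar} x c" for x c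
  have bound: "\<bar>Vf x c - Vn M W \<mu> \<sigma> q \<Lambda> Sn n x c\<bar> \<le> b n" if "0 \<le> c" "c \<le> cbar" for n x c
    unfolding Vf_def b_def Vn_def
    using assms that by (intro key[OF M]) auto
  have b0: "b \<longlonglongrightarrow> 0"
  proof -
    have "(\<lambda>n. \<bar>mesh (Sn n)\<bar>) \<longlonglongrightarrow> \<bar>0\<bar>" by (intro tendsto_rabs assms(11))
    then have "(\<lambda>n. \<bar>mesh (Sn n)\<bar> * ((cbar + \<Lambda>) / q) / \<Lambda>) \<longlonglongrightarrow> 0 * ((cbar + \<Lambda>) / q) / \<Lambda>"
      using assms(4) by (intro tendsto_intros) auto
    then show ?thesis unfolding b_def by simp
  qed
  have Vbar_eq: "Vbar M W \<mu> \<sigma> q \<Lambda> Sn x c = Vf x c" if "0 \<le> c" "c \<le> cbar" for x c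
  proof -
    have "(\<lambda>n. Vn M W \<mu> \<sigma> q \<Lambda> Sn n x c - Vf x c) \<longlonglongrightarrow> 0"
      using bound[OF that] by (intro Lim_null_comparison[OF _ b0] always_eventually) (auto simp: abs_minus_commute)
    then have "(\<lambda>n. Vn M W \<mu> \<sigma> q \<Lambda> Sn n x c) \<longlonglongrightarrow> Vf x c" by (rule LIM_zero_cancel)
    then show ?thesis unfolding Vbar_def by (rule limI)
  qed
  show ?thesis
  proof (rule uniform_limitI)
    fix e :: real assume e: "e > 0"
    have "\<forall>\<^sub>F n in sequentially. b n < e"
      using order_tendstoD(2)[OF b0 e] .
    then show "\<forall>\<^sub>F n in sequentially. \<forall>xc\<in>({0..} \<times> {0..cbar} :: (real \<times> real) set).
        dist ((\<lambda>(x, c). Vn M W \<mu> \<sigma> q \<Lambda> Sn n x c) xc) ((\<lambda>(x, c). Vbar M W \<mu> \<sigma> q \<Lambda> Sn x c) xc) < e"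
    proof eventually_elim
      case (elim n)
      show ?case
      proof
        fix xc :: "real \<times> real" assume "xc \<in> {0..} \<times> {0..cbar}"
        then obtain x c where xc: "xc = (x, c)" "0 \<le> c" "c \<le> cbar" by auto
        show "dist ((\<lambda>(x, c). Vn M W \<mu> \<sigma> q \<Lambda> Sn n x c) xc) ((\<lambda>(x, c). Vbar M W \<mu> \<sigma> q \<Lambda> Sn x c) xc) < e"
          using bound[OF xc(2,3), of x n] Vbar_eq[OF xc(2,3), of x] elim xc(1)
          by (simp add: dist_real_def abs_minus_commute)
      qed
    qed
  qed
qed

end
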